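(* For every integer $p\ge 3$, $$\mu(S_p^2)=\begin{cases}\frac{(p+1)^2}{4}, & p\text{ odd},\\ \frac{p(p+2)}{4}, & p\text{ even},\end{cases}\qquad \#\mu(S_p^2)=\begin{cases}\binom{p}{(p+1)/2}, & p\text{ odd},\\ \binom{p+1}{(p+2)/2}, & p\text{ even}.\end{cases}$$
   Context: For $p\ge3$, $n\ge1$, the Sierpiński graph $S_p^n$ has vertex set $\{0,1,\dots,p-1\}^n$, a vertex $(i_1,\dots,i_n)$ written $i_1\cdots i_n$; vertices $i_1\cdots i_n$ and $j_1\cdots j_n$ are adjacent iff there is $h\in\{1,\dots,n\}$ with $i_t=j_t$ for all $t<h$, $i_h\ne j_h$, and $i_t=j_h$, $j_t=i_h$ for all $t>h$. For $X\subseteq V(G)$, vertices $u,v$ are $X$-visible if there exists a shortest $u,v$-path $P$ with $V(P)\cap X\subseteq\{u,v\}$; $X$ is a mutual-visibility set if every two vertices of $X$ are $X$-visible; $\mu(G)$ is the maximum size of a mutual-visibility set, and $\#\mu(G)$ is the number of mutual-visibility sets of size $\mu(G)$. *)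

theory Defs
  imports Main
begin

text \<open>Vertices of S_p^n: words of length n over the alphabet {0,...,p-1}, as lists
  (the list index i corresponds to position i+1 of the word).\<close>

definition sierp_vertices :: "nat \<Rightarrow> nat \<Rightarrow> nat list set" where
  "sierp_vertices p n = {w. length w = n \<and> set w \<subseteq> {0..<p}}"

definition sierp_adj :: "nat \<Rightarrow> nat \<Rightarrow> nat list \<Rightarrow> nat list \<Rightarrow> bool" where
  "sierp_adj p n u v \<longleftrightarrow> u \<in> sierp_vertices p n \<and> v \<in> sierp_vertices p n \<and>
     (\<exists>h<n. (\<forall>t<h. u ! t = v ! t) \<and> u ! h \<noteq> v ! h \<and>
            (\<forall>t. h < t \<and> t < n \<longrightarrow> u ! t = v ! h \<and> v ! t = u ! h))"

definition is_walk :: "'a set \<Rightarrow> ('a \<Rightarrow> 'a \<Rightarrow> bool) \<Rightarrow> 'a list \<Rightarrow> bool" where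
  "is_walk V E P \<longleftrightarrow> P \<noteq> [] \<and> set P \<subseteq> V \<and> (\<forall>i. Suc i < length P \<longrightarrow> E (P ! i) (P ! Suc i))"

definition walk_between :: "'a set \<Rightarrow> ('a \<Rightarrow> 'a \<Rightarrow> bool) \<Rightarrow> 'a \<Rightarrow> 'a \<Rightarrow> 'a list \<Rightarrow> bool" where
  "walk_between V E u v P \<longleftrightarrow> is_walk V E P \<and> hd P = u \<and> last P = v"

text \<open>Graph distance (number of edges of a shortest walk); only used for connected graphs.\<close>

definition gdist :: "'a set \<Rightarrow> ('a \<Rightarrow> 'a \<Rightarrow> bool) \<Rightarrow> 'a \<Rightarrow> 'a \<Rightarrow> nat" where
  "gdist V E u v = (LEAST k. \<exists>P. walk_between V E u v P \<and> length P = Suc k)"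

text \<open>A shortest u,v-path: a u,v-walk with exactly gdist edges (such a walk is a path).\<close>

definition shortest_path :: "'a set \<Rightarrow> ('a \<Rightarrow> 'a \<Rightarrow> bool) \<Rightarrow> 'a \<Rightarrow> 'a \<Rightarrow> 'a list \<Rightarrow> bool" where
  "shortest_path V E u v P \<longleftrightarrow> walk_between V E u v P \<and> length P = Suc (gdist V E u v)"

definition X_visible :: "'a set \<Rightarrow> ('a \<Rightarrow> 'a \<Rightarrow> bool) \<Rightarrow> 'a set \<Rightarrow> 'a \<Rightarrow> 'a \<Rightarrow> bool" where
  "X_visible V E X u v \<longleftrightarrow> (\<exists>P. shortest_path V E u v P \<and> set P \<inter> X \<subseteq> {u, v})"

definition mutual_visibility_set :: "'a set \<Rightarrow> ('a \<Rightarrow> 'a \<Rightarrow> bool) \<Rightarrow> 'a set \<Rightarrow> bool" where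
  "mutual_visibility_set V E X \<longleftrightarrow> X \<subseteq> V \<and> (\<forall>u\<in>X. \<forall>v\<in>X. X_visible V E X u v)"

definition mu :: "'a set \<Rightarrow> ('a \<Rightarrow> 'a \<Rightarrow> bool) \<Rightarrow> nat" where
  "mu V E = Max (card ` {X. mutual_visibility_set V E X})"

definition num_mu :: "'a set \<Rightarrow> ('a \<Rightarrow> 'a \<Rightarrow> bool) \<Rightarrow> nat" where
  "num_mu V E = card {X. mutual_visibility_set V E X \<and> card X = mu V E}"

end

theory Submission
  imports Defs
begin


abbreviation "VV p \<equiv> sierp_vertices p 2"
abbreviation "EE p \<equiv> sierp_adj p 2"

lemma ex_less2: "(\<exists>h<(2::nat). P h) \<longleftrightarrow> P 0 \<or> P 1"
  by (metis One_nat_def less_2_cases numeral_2_eq_2 zero_less_Suc lessI)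

lemma vert2: "x \<in> VV p \<longleftrightarrow> (\<exists>a b. x = [a,b] \<and> a < p \<and> b < p)"
  unfolding sierp_vertices_def
  by (auto simp: length_Suc_conv numeral_2_eq_2)

lemma adj2: "EE p [a,b] [c,d] \<longleftrightarrow> a<p \<and> b<p \<and> c<p \<and> d<p \<and> ((a\<noteq>c \<and> b=c \<and> d=a) \<or> (a=c \<and> b\<noteq>d))"
  unfolding sierp_adj_def ex_less2 by (auto simp: vert2 less_2_cases_iff)

lemma walk1: "is_walk V E [x] \<longleftrightarrow> x \<in> V"
  unfolding is_walk_def by auto
lemma walk2: "is_walk V E [x,y] \<longleftrightarrow> x \<in> V \<and> y \<in> V \<and> E x y"
  unfolding is_walk_def by (auto simp: less_Suc_eq)
lemma walk3: "is_walk V E [x,y,z] \<longleftrightarrow> x \<in> V \<and> y \<in> V \<and> z \<in> V \<and> E x y \<and> E y z"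
  unfolding is_walk_def by (auto simp: less_Suc_eq)
lemma walk4: "is_walk V E [x,y,z,w] \<longleftrightarrow> x \<in> V \<and> y \<in> V \<and> z \<in> V \<and> w \<in> V \<and> E x y \<and> E y z \<and> E z w"
  unfolding is_walk_def by (auto simp: less_Suc_eq)



definition dpath :: "nat\<Rightarrow>nat\<Rightarrow>nat\<Rightarrow>nat\<Rightarrow>nat list list" where
"dpath i j k l = [i,j] # (if j\<noteq>k then [[i,k]] else []) @ [[k,i]] @ (if l\<noteq>i then [[k,l]] else [])"

lemma len_cases4: "xs \<noteq> [] \<Longrightarrow> length xs \<le> 4 \<Longrightarrow>
  (\<exists>a. xs=[a]) \<or> (\<exists>a b. xs=[a,b]) \<or> (\<exists>a b c. xs=[a,b,c]) \<or> (\<exists>a b c d. xs=[a,b,c,d])"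
proof -
  assume "xs \<noteq> []" "length xs \<le> 4"
  then have "length xs \<noteq> 0" by simp
  with \<open>length xs \<le> 4\<close> have "length xs = 1 \<or> length xs = 2 \<or> length xs = 3 \<or> length xs = 4"
    by linarith
  then show ?thesis by (auto simp: length_Suc_conv numeral_eq_Suc)
qed

lemma dpath_walk:
  assumes "i<p" "j<p" "k<p" "l<p" "i\<noteq>k"
  shows "walk_between (VV p) (EE p) [i,j] [k,l] (dpath i j k l)"
  using assms unfolding walk_between_def dpath_def
  by (auto simp: walk1 walk2 walk3 walk4 adj2 vert2)

lemma walk_class:
  assumes "i<p" "j<p" "k<p" "l<p" "i\<noteq>k" "walk_between (VV p) (EE p) [i,j] [k,l] Q"
    "length Q \<le> length (dpath i j k l)"
  shows "Q = dpath i j k l \<or> (j=l \<and> j\<noteq>i \<and> j\<noteq>k \<and> Q = [[i,j],[j,i],[j,k],[k,j]])"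
proof -
  have ne: "Q \<noteq> []" using assms(6) by (simp add: walk_between_def is_walk_def)
  have "length (dpath i j k l) \<le> 4" by (simp add: dpath_def)
  then have "length Q \<le> 4" using assms(7) by linarith
  from len_cases4[OF ne this] show ?thesis
  proof (elim disjE exE)
    fix a assume "Q = [a]" then show ?thesis using assms by (auto simp: walk_between_def)
  next
    fix a b assume Q: "Q = [a,b]"
    then obtain c d where b: "b = [c,d]" using assms(6) by (auto simp: walk_between_def walk2 vert2)
    show ?thesis using assms Q b by (auto simp: walk_between_def walk2 adj2 dpath_def)
  next
    fix a b c assume Q: "Q = [a,b,c]"
    then obtain x y where b: "b = [x,y]" using assms(6) by (auto simp: walk_between_def walk3 vert2)
    show ?thesis using assms Q b by (auto simp: walk_between_def walk3 adj2 dpath_def split: if_splits)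
  next
    fix a b c d assume Q: "Q = [a,b,c,d]"
    then obtain x y where b: "b = [x,y]" using assms(6) by (auto simp: walk_between_def walk4 vert2)
    obtain z w where c: "c = [z,w]" using assms(6) Q by (auto simp: walk_between_def walk4 vert2)
    show ?thesis using assms Q b c by (auto simp: walk_between_def walk4 adj2 dpath_def split: if_splits)
  qed
qed



lemma sp_intro:
  assumes "walk_between V E u v P" "\<And>Q. walk_between V E u v Q \<Longrightarrow> length P \<le> length Q"
  shows "shortest_path V E u v P"
proof -
  have ne: "P \<noteq> []" using assms(1) by (simp add: walk_between_def is_walk_def)
  then obtain m where m: "length P = Suc m" by (cases P) auto
  have "gdist V E u v = m" unfolding gdist_def
  proof (rule Least_equality)
    show "\<exists>P. walk_between V E u v P \<and> length P = Suc m" using assms(1) m by blast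
  next
    fix k assume "\<exists>P. walk_between V E u v P \<and> length P = Suc k"
    then obtain Q where "walk_between V E u v Q" "length Q = Suc k" by blast
    with assms(2) m show "m \<le> k" by fastforce
  qed
  then show ?thesis using assms(1) m by (simp add: shortest_path_def)
qed

lemma sp_min:
  assumes "shortest_path V E u v P" "walk_between V E u v Q"
  shows "length P \<le> length Q"
proof -
  have ne: "Q \<noteq> []" using assms(2) by (simp add: walk_between_def is_walk_def)
  then obtain m where m: "length Q = Suc m" by (cases Q) auto
  have "gdist V E u v \<le> m" unfolding gdist_def
    by (rule Least_le) (use assms(2) m in blast)
  then show ?thesis using assms(1) m by (simp add: shortest_path_def)
qed

lemma dpath_sp:
  assumes "i<p" "j<p" "k<p" "l<p" "i\<noteq>k"
  shows "shortest_path (VV p) (EE p) [i,j] [k,l] (dpath i j k l)"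
proof (rule sp_intro)
  show "walk_between (VV p) (EE p) [i,j] [k,l] (dpath i j k l)" using dpath_walk[OF assms] .
  fix Q assume Q: "walk_between (VV p) (EE p) [i,j] [k,l] Q"
  show "length (dpath i j k l) \<le> length Q"
  proof (rule ccontr)
    assume "\<not> ?thesis"
    then have "length Q \<le> length (dpath i j k l)" by simp
    from walk_class[OF assms Q this] \<open>\<not> ?thesis\<close> show False
      by (auto simp: dpath_def)
  qed
qed

lemma sp_class:
  assumes "i<p" "j<p" "k<p" "l<p" "i\<noteq>k" "shortest_path (VV p) (EE p) [i,j] [k,l] P"
  shows "P = dpath i j k l \<or> (j=l \<and> j\<noteq>i \<and> j\<noteq>k \<and> P = [[i,j],[j,i],[j,k],[k,j]])"
proof -
  have w: "walk_between (VV p) (EE p) [i,j] [k,l] P" using assms(6) by (simp add: shortest_path_def)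
  have "length P \<le> length (dpath i j k l)" using sp_min[OF assms(6) dpath_walk[OF assms(1-5)]] .
  from walk_class[OF assms(1-5) w this] show ?thesis .
qed

lemma same_sp:
  assumes "i<p" "j<p" "l<p"
  shows "\<exists>P. shortest_path (VV p) (EE p) [i,j] [i,l] P \<and> set P \<subseteq> {[i,j],[i,l]}"
proof (cases "j = l")
  case True
  have "shortest_path (VV p) (EE p) [i,j] [i,l] [[i,j]]"
    by (rule sp_intro) (use assms True in \<open>auto simp: walk_between_def walk1 vert2 is_walk_def Suc_le_eq\<close>)
  then show ?thesis by auto
next
  case False
  have "shortest_path (VV p) (EE p) [i,j] [i,l] [[i,j],[i,l]]"
  proof (rule sp_intro)
    show "walk_between (VV p) (EE p) [i,j] [i,l] [[i,j],[i,l]]"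
      using assms False by (auto simp: walk_between_def walk2 vert2 adj2)
    fix Q assume Q: "walk_between (VV p) (EE p) [i,j] [i,l] Q"
    then have "Q \<noteq> []" by (simp add: walk_between_def is_walk_def)
    moreover have "length Q \<noteq> 1"
    proof
      assume "length Q = 1"
      then obtain a where "Q = [a]" by (auto simp: length_Suc_conv)
      with Q False show False by (auto simp: walk_between_def)
    qed
    ultimately show "length [[i,j],[i,l]] \<le> length Q" by (cases Q) (auto simp: Suc_le_eq)
  qed
  then show ?thesis by auto
qed

lemma vis:
  assumes mv: "mutual_visibility_set (VV p) (EE p) X" and u: "[i,j] \<in> X" and v: "[k,l] \<in> X"
    and ik: "i \<noteq> k"
  shows "((j\<noteq>k \<longrightarrow> [i,k]\<notin>X) \<and> (l\<noteq>i \<longrightarrow> [k,i]\<notin>X)) \<or> (j=l \<and> j\<noteq>i \<and> j\<noteq>k \<and> [j,i]\<notin>X \<and> [j,k]\<notin>X)"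
proof -
  have XV: "X \<subseteq> VV p" using mv by (simp add: mutual_visibility_set_def)
  have lt: "i<p" "j<p" "k<p" "l<p" using XV u v by (auto simp: vert2)
  have "X_visible (VV p) (EE p) X [i,j] [k,l]" using mv u v by (simp add: mutual_visibility_set_def)
  then obtain P where P: "shortest_path (VV p) (EE p) [i,j] [k,l] P" "set P \<inter> X \<subseteq> {[i,j],[k,l]}"
    unfolding X_visible_def by blast
  from sp_class[OF lt ik P(1)] show ?thesis
  proof
    assume "P = dpath i j k l"
    with P(2) ik show ?thesis by (auto simp: dpath_def split: if_splits)
  next
    assume "j=l \<and> j\<noteq>i \<and> j\<noteq>k \<and> P = [[i,j],[j,i],[j,k],[k,j]]"
    with P(2) ik show ?thesis by auto
  qed
qed



definition AA :: "nat list set \<Rightarrow> nat \<Rightarrow> nat set" where "AA X i = {j. [i,j] \<in> X}"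
definition Occ :: "nat list set \<Rightarrow> nat set" where "Occ X = {i. AA X i \<noteq> {}}"

lemma AA_sub: "X \<subseteq> VV p \<Longrightarrow> AA X i \<subseteq> {0..<p}"
  by (auto simp: AA_def vert2)
lemma Occ_sub: "X \<subseteq> VV p \<Longrightarrow> Occ X \<subseteq> {0..<p}"
  by (auto simp: Occ_def AA_def vert2)

lemma cardX:
  assumes "X \<subseteq> VV p"
  shows "card X = (\<Sum>i\<in>Occ X. card (AA X i))"
proof -
  have eq: "X = (\<lambda>(i,j). [i,j]) ` (SIGMA i:Occ X. AA X i)"
  proof
    show "X \<subseteq> (\<lambda>(i,j). [i,j]) ` (SIGMA i:Occ X. AA X i)"
    proof
      fix x assume "x \<in> X"
      then have "x \<in> VV p" using assms by blast
      then obtain a b where "x = [a,b]" unfolding vert2 by blast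
      with \<open>x \<in> X\<close> show "x \<in> (\<lambda>(i,j). [i,j]) ` (SIGMA i:Occ X. AA X i)"
        by (auto simp: Occ_def AA_def image_iff)
    qed
  qed (auto simp: Occ_def AA_def)
  have inj: "inj_on (\<lambda>(i,j). [i::nat,j]) (SIGMA i:Occ X. AA X i)"
    by (auto simp: inj_on_def)
  have fO: "finite (Occ X)" using Occ_sub[OF assms] finite_subset by blast
  have fA: "\<forall>i\<in>Occ X. finite (AA X i)" using AA_sub[OF assms] finite_subset by blast
  have "card X = card ((\<lambda>(i,j). [i::nat,j]) ` (SIGMA i:Occ X. AA X i))" using arg_cong[OF eq, of card] .
  also have "\<dots> = card (SIGMA i:Occ X. AA X i)" using card_image[OF inj] .
  also have "\<dots> = (\<Sum>i\<in>Occ X. card (AA X i))" using fO fA by simp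
  finally show ?thesis .
qed

lemma L1:
  assumes mv: "mutual_visibility_set (VV p) (EE p) X"
    and ik: "i \<noteq> k" and kA: "k \<in> AA X i" and kO: "AA X k \<noteq> {}" and c2: "card (AA X i) \<ge> 2"
  shows "\<exists>j. AA X i = {k,j} \<and> AA X k = {j} \<and> AA X j = {} \<and> j \<noteq> k"
proof -
  have XV: "X \<subseteq> VV p" using mv by (simp add: mutual_visibility_set_def)
  have ikX: "[i,k] \<in> X" using kA by (simp add: AA_def)
  have C: "j' = l \<and> [j',k] \<notin> X" if "j' \<in> AA X i" "j' \<noteq> k" "l \<in> AA X k" for j' l
    using vis[OF mv _ _ ik, of j' l] that ikX by (auto simp: AA_def)
  have "AA X i - {k} \<noteq> {}"
  proof
    assume "AA X i - {k} = {}"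
    then have "AA X i \<subseteq> {k}" by auto
    then have "card (AA X i) \<le> card {k}" by (intro card_mono) auto
    with c2 show False by simp
  qed
  then obtain j where j: "j \<in> AA X i" "j \<noteq> k" by auto
  obtain l where l: "l \<in> AA X k" using kO by auto
  have Ak: "AA X k = {j}" using C[OF j] l by auto
  have Ai: "AA X i = {k,j}" using C Ak kA j by auto
  have "AA X j = {}"
  proof
    show "AA X j \<subseteq> {}"
    proof
      fix m assume m: "m \<in> AA X j"
      have "i \<noteq> j" using j vis[OF mv, of i j k l] ikX Ak l C[OF j l] by (auto simp: AA_def)
      have ijX: "[i,j] \<in> X" using j by (simp add: AA_def)
      have kjX: "[k,j] \<in> X" using Ak by (auto simp: AA_def)
      from vis[OF mv ikX _ \<open>i \<noteq> j\<close>, of m] m ijX kjX j show "m \<in> {}" by (auto simp: AA_def)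
    qed
  qed simp
  with Ai Ak j show ?thesis by blast
qed



lemma fin_Occ: "X \<subseteq> VV p \<Longrightarrow> finite (Occ X)"
  by (rule finite_subset[OF Occ_sub]) auto
lemma card_Occ: "X \<subseteq> VV p \<Longrightarrow> card (Occ X) \<le> p"
proof -
  assume "X \<subseteq> VV p"
  then have "card (Occ X) \<le> card {0..<p}" by (intro card_mono Occ_sub) auto
  then show ?thesis by simp
qed

lemma L2:
  assumes mv: "mutual_visibility_set (VV p) (EE p) X" and iO: "i \<in> Occ X"
  shows "card (AA X i) \<le> p + 1 - card (Occ X)"
proof -
  have XV: "X \<subseteq> VV p" using mv by (simp add: mutual_visibility_set_def)
  have sp: "card (Occ X) \<le> p" using card_Occ[OF XV] .
  have Osub: "Occ X \<subseteq> {0..<p}" using Occ_sub[OF XV] .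
  show ?thesis
  proof (cases "AA X i \<subseteq> ({0..<p} - Occ X) \<union> {i}")
    case True
    have "card (AA X i) \<le> card (({0..<p} - Occ X) \<union> {i})" using True by (intro card_mono) auto
    also have "\<dots> \<le> card ({0..<p} - Occ X) + card {i}" by (rule card_Un_le)
    also have "card ({0..<p} - Occ X) = p - card (Occ X)" using Osub
      by (simp add: card_Diff_subset fin_Occ[OF XV])
    finally show ?thesis using sp by simp
  next
    case False
    have Asub: "AA X i \<subseteq> {0..<p}" using AA_sub[OF XV] .
    from False Asub obtain k where k: "k \<in> AA X i" "k \<in> Occ X" "k \<noteq> i" by auto
    show ?thesis
    proof (cases "card (AA X i) \<ge> 2")
      case False then show ?thesis using sp by simp
    next
      case True
      have kO: "AA X k \<noteq> {}" using k by (simp add: Occ_def)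
      from L1[OF mv k(3)[symmetric] k(1) kO True] obtain j where
        j: "AA X i = {k,j}" "AA X k = {j}" "AA X j = {}" "j \<noteq> k" by blast
      have "j < p" using Asub j(1) by auto
      have "Occ X \<subseteq> {0..<p} - {j}" using Osub j(3) by (auto simp: Occ_def)
      then have "card (Occ X) \<le> card ({0..<p} - {j})" by (intro card_mono) auto
      also have "\<dots> = p - 1" using \<open>j<p\<close> by simp
      finally show ?thesis using j(1,4) \<open>j<p\<close> by simp
    qed
  qed
qed

lemma bound:
  assumes mv: "mutual_visibility_set (VV p) (EE p) X"
  shows "card X \<le> card (Occ X) * (p + 1 - card (Occ X))"
proof -
  have XV: "X \<subseteq> VV p" using mv by (simp add: mutual_visibility_set_def)
  have "card X = (\<Sum>i\<in>Occ X. card (AA X i))" using cardX[OF XV] .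
  also have "\<dots> \<le> card (Occ X) * (p + 1 - card (Occ X))"
    using sum_bounded_above[of "Occ X" "\<lambda>i. card (AA X i)" "p + 1 - card (Occ X)"] L2[OF mv] by simp
  finally show ?thesis .
qed

definition MM :: "nat \<Rightarrow> nat" where "MM p = (p+1)^2 div 4"

lemma ar_le: "s * (p + 1 - s) \<le> MM p"
proof (cases "s \<le> p + 1")
  case True
  define t where "t = p + 1 - s"
  have pt: "p + 1 = s + t" using True t_def by simp
  have "4 * (s*t) \<le> (s+t)^2"
  proof (cases "s \<le> t")
    case True then obtain d where "t = s + d" using le_Suc_ex by blast
    then show ?thesis by (simp add: algebra_simps power2_eq_square)
  next
    case False then obtain d where "s = t + d" using le_Suc_ex[of t s] by auto
    then show ?thesis by (simp add: algebra_simps power2_eq_square)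
  qed
  then have "(4 * (s*t)) div 4 \<le> (s+t)^2 div 4" by (rule div_le_mono)
  then show ?thesis unfolding MM_def t_def using pt by (simp add: t_def)
next
  case False then show ?thesis by simp
qed

lemma ar_eq:
  assumes "s \<le> p" "s * (p + 1 - s) = MM p"
  shows "s = p + 1 - s \<or> s = p + 2 - s \<or> s + 1 = p + 1 - s"
proof (rule ccontr)
  assume nc: "\<not> ?thesis"
  define t where "t = p + 1 - s"
  have pt: "p + 1 = s + t" using assms t_def by simp
  have ne: "s \<noteq> t" "s + 1 \<noteq> t" "s \<noteq> t + 1" using nc pt t_def by auto
  have "4 * (s*t) + 4 \<le> (s+t)^2"
  proof (cases "s \<le> t")
    case True then have "s + 2 \<le> t" using ne by linarith
    then obtain d where "t = s + 2 + d" using le_Suc_ex by blast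
    then show ?thesis by (simp add: algebra_simps power2_eq_square)
  next
    case False then have "t + 2 \<le> s" using ne by linarith
    then obtain d where "s = t + 2 + d" using le_Suc_ex by blast
    then show ?thesis by (simp add: algebra_simps power2_eq_square)
  qed
  then have "(4 * (s*t+1)) div 4 \<le> (s+t)^2 div 4" by (intro div_le_mono) simp
  then have "s*t + 1 \<le> MM p" unfolding MM_def using pt by simp
  with assms(2) t_def show False by simp
qed



lemma opt_iff:
  assumes "s \<le> p"
  shows "s * (p + 1 - s) = MM p \<longleftrightarrow> (if odd p then s = (p+1) div 2 else s = p div 2 \<or> s = p div 2 + 1)"
proof
  assume "s * (p + 1 - s) = MM p"
  from ar_eq[OF assms this] assms show "(if odd p then s = (p+1) div 2 else s = p div 2 \<or> s = p div 2 + 1)"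
    by (auto elim!: oddE evenE)
next
  assume h: "(if odd p then s = (p+1) div 2 else s = p div 2 \<or> s = p div 2 + 1)"
  show "s * (p + 1 - s) = MM p"
  proof (cases "odd p")
    case True
    then obtain m where p: "p = 2*m+1" by (auto elim: oddE)
    have "(p+1)^2 = 4*((m+1)*(m+1))" unfolding p by (simp add: power2_eq_square algebra_simps)
    then show ?thesis using h True p unfolding MM_def by simp
  next
    case False
    then obtain m where p: "p = 2*m" by (auto elim: evenE)
    have "(p+1)^2 = 4*(m*(m+1)) + 1" unfolding p by (simp add: power2_eq_square algebra_simps)
    then have "MM p = m*(m+1)" unfolding MM_def by simp
    then show ?thesis using h False p by (auto simp: algebra_simps)
  qed
qed

lemma MM_gt: "3 \<le> p \<Longrightarrow> p < MM p"
proof -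
  assume "3 \<le> p"
  then obtain q where p: "p = 3 + q" using le_Suc_ex by blast
  have "(p+1)^2 = 4*(p+1) + q*(q+4)" unfolding p by (simp add: power2_eq_square algebra_simps)
  then have "(4*(p+1)) div 4 \<le> (p+1)^2 div 4" by (intro div_le_mono) simp
  then show ?thesis unfolding MM_def by simp
qed

lemma MM_stmt: "MM p = (if odd p then (p + 1)^2 div 4 else p * (p + 2) div 4)"
proof (cases "odd p")
  case False
  then obtain m where p: "p = 2*m" by (auto elim: evenE)
  have "(p+1)^2 = 4*(m*(m+1)) + 1" unfolding p by (simp add: power2_eq_square algebra_simps)
  then have "MM p = m*(m+1)" unfolding MM_def by simp
  moreover have "p*(p+2) = 4*(m*(m+1))" unfolding p by (simp add: algebra_simps)
  ultimately show ?thesis using False by simp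
qed (simp add: MM_def)

definition XS :: "nat \<Rightarrow> nat set \<Rightarrow> nat list set" where
  "XS p S = {[i,j] | i j. i \<in> S \<and> j < p \<and> (j \<notin> S \<or> j = i)}"

lemma XS_mem: "[i,j] \<in> XS p S \<longleftrightarrow> i \<in> S \<and> j < p \<and> (j \<notin> S \<or> j = i)"
  by (auto simp: XS_def)

lemma XS_sub: "S \<subseteq> {0..<p} \<Longrightarrow> XS p S \<subseteq> VV p"
  by (auto simp: XS_def vert2)

lemma AA_XS: "S \<subseteq> {0..<p} \<Longrightarrow> AA (XS p S) i = (if i \<in> S then ({0..<p} - S) \<union> {i} else {})"
  by (auto simp: AA_def XS_def)

lemma Occ_XS: "S \<subseteq> {0..<p} \<Longrightarrow> Occ (XS p S) = S"
  by (auto simp: Occ_def AA_XS)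

lemma card_piece:
  assumes "S \<subseteq> {0..<p}" "i \<in> S"
  shows "card (({0..<p} - S) \<union> {i}) = p + 1 - card S"
proof -
  have fS: "finite S" using assms(1) finite_subset by blast
  have "card S \<le> p" using card_mono[OF _ assms(1)] by simp
  moreover have "card (({0..<p} - S) \<union> {i}) = card ({0..<p} - S) + 1"
    using assms(2) by (simp add: card_Un_disjoint)
  moreover have "card ({0..<p} - S) = p - card S" using assms(1) fS by (simp add: card_Diff_subset)
  ultimately show ?thesis by simp
qed

lemma card_XS:
  assumes "S \<subseteq> {0..<p}"
  shows "card (XS p S) = card S * (p + 1 - card S)"
proof -
  have "card (XS p S) = (\<Sum>i\<in>S. card (AA (XS p S) i))"
    using cardX[OF XS_sub[OF assms]] Occ_XS[OF assms] by simp
  also have "\<dots> = (\<Sum>i\<in>S. p + 1 - card S)"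
  proof (rule sum.cong)
    fix i assume i: "i \<in> S"
    have "AA (XS p S) i = ({0..<p}-S) \<union> {i}" using AA_XS[OF assms] i by simp
    then show "card (AA (XS p S) i) = p + 1 - card S" using card_piece[OF assms i] by metis
  qed simp
  finally show ?thesis by simp
qed

lemma mv_XS:
  assumes "S \<subseteq> {0..<p}"
  shows "mutual_visibility_set (VV p) (EE p) (XS p S)"
  unfolding mutual_visibility_set_def
proof (intro conjI ballI)
  show "XS p S \<subseteq> VV p" using XS_sub[OF assms] .
  fix u v assume u: "u \<in> XS p S" and v: "v \<in> XS p S"
  from u obtain i j where ij: "u = [i,j]" "i \<in> S" "j < p" "j \<notin> S \<or> j = i" by (auto simp: XS_def)
  from v obtain k l where kl: "v = [k,l]" "k \<in> S" "l < p" "l \<notin> S \<or> l = k" by (auto simp: XS_def)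
  have ip: "i < p" "k < p" using ij kl assms by auto
  show "X_visible (VV p) (EE p) (XS p S) u v"
  proof (cases "i = k")
    case True
    from same_sp[OF ip(1) ij(3) kl(3)] obtain P where
      "shortest_path (VV p) (EE p) [i,j] [i,l] P" "set P \<subseteq> {[i,j],[i,l]}" by blast
    then show ?thesis unfolding X_visible_def using ij kl True by blast
  next
    case False
    have sp: "shortest_path (VV p) (EE p) u v (dpath i j k l)"
      using dpath_sp[OF ip(1) ij(3) ip(2) kl(3) False] ij kl by simp
    have "set (dpath i j k l) \<inter> XS p S \<subseteq> {u,v}"
      using ij kl False by (auto simp: dpath_def XS_def)
    then show ?thesis unfolding X_visible_def using sp by blast
  qed
qed

lemma eqcase:
  assumes mv: "mutual_visibility_set (VV p) (EE p) X" and cX: "card X = MM p" and p3: "3 \<le> p"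
  shows "X = XS p (Occ X) \<and> card (Occ X) * (p + 1 - card (Occ X)) = MM p"
proof -
  have XV: "X \<subseteq> VV p" using mv by (simp add: mutual_visibility_set_def)
  define s where "s = card (Occ X)"
  have sp: "s \<le> p" using card_Occ[OF XV] s_def by simp
  have Osub: "Occ X \<subseteq> {0..<p}" using Occ_sub[OF XV] .
  have b: "card X \<le> s * (p + 1 - s)" using bound[OF mv] s_def by simp
  have sM: "s * (p + 1 - s) = MM p" using b ar_le[of s p] cX by simp
  have sum: "(\<Sum>i\<in>Occ X. card (AA X i)) = (\<Sum>i\<in>Occ X. p + 1 - s)"
    using cardX[OF XV] cX sM s_def by simp
  have each: "card (AA X i) = p + 1 - s" if "i \<in> Occ X" for i
    by (rule sum_mono_inv[OF sum _ that fin_Occ[OF XV]]) (use L2[OF mv] s_def in simp)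
  have "s \<noteq> p" using sM MM_gt[OF p3] by auto
  then have two: "p + 1 - s \<ge> 2" using sp by simp
  have AAeq: "AA X i = ({0..<p} - Occ X) \<union> {i}" if iO: "i \<in> Occ X" for i
  proof -
    have sub: "AA X i \<subseteq> ({0..<p} - Occ X) \<union> {i}"
    proof
      fix k assume k: "k \<in> AA X i"
      show "k \<in> ({0..<p} - Occ X) \<union> {i}"
      proof (rule ccontr)
        assume nk: "k \<notin> ({0..<p} - Occ X) \<union> {i}"
        have "AA X i \<subseteq> {0..<p}" by (rule AA_sub[OF XV])
        then have kp: "k < p" using k by auto
        then have kO: "AA X k \<noteq> {}" "k \<noteq> i" using nk by (auto simp: Occ_def)
        have "card (AA X i) \<ge> 2" using each[OF iO] two by simp
        from L1[OF mv kO(2)[symmetric] k kO(1) this] obtain j where "AA X k = {j}" by blast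
        moreover have "k \<in> Occ X" using kO by (simp add: Occ_def)
        ultimately show False using each two by fastforce
      qed
    qed
    have "card (AA X i) = card (({0..<p} - Occ X) \<union> {i})"
      using each[OF iO] card_piece[OF Osub iO] s_def by simp
    then show ?thesis using card_subset_eq[OF _ sub] by auto
  qed
  have "X = XS p (Occ X)"
  proof
    show "X \<subseteq> XS p (Occ X)"
    proof
      fix x assume x: "x \<in> X"
      then have "x \<in> VV p" using XV by blast
      then obtain a b where ab: "x = [a,b]" unfolding vert2 by blast
      then have bA: "b \<in> AA X a" and aO: "a \<in> Occ X" using x by (auto simp: AA_def Occ_def)
      have ap: "a < p" using Osub aO by (meson atLeastLessThan_iff subsetD)
      have "b \<in> ({0..<p} - Occ X) \<union> {a}" using AAeq[OF aO] bA by simp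
      then show "x \<in> XS p (Occ X)" using ab aO ap by (auto simp: XS_mem)
    qed
  next
    show "XS p (Occ X) \<subseteq> X"
    proof
      fix x assume "x \<in> XS p (Occ X)"
      then obtain i j where "x = [i,j]" "i \<in> Occ X" "j < p" "j \<notin> Occ X \<or> j = i"
        by (auto simp: XS_def)
      moreover have "j \<in> AA X i" using AAeq[OF \<open>i \<in> Occ X\<close>] \<open>j < p\<close> \<open>j \<notin> Occ X \<or> j = i\<close> by auto
      ultimately show "x \<in> X" by (simp add: AA_def)
    qed
  qed
  with sM s_def show ?thesis by simp
qed



lemma finV: "finite (VV p)"
proof -
  have "VV p = {xs. set xs \<subseteq> {0..<p} \<and> length xs = 2}" by (auto simp: sierp_vertices_def)
  then show ?thesis using finite_lists_length_eq[of "{0..<p}" 2] by simp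
qed

lemma card_le_p: "S \<subseteq> {0..<p} \<Longrightarrow> card S \<le> p"
  using card_mono[of "{0..<p}" S] by simp

lemma optset: "{S. S \<subseteq> {0..<p} \<and> card S * (p + 1 - card S) = MM p} =
   {S. S \<subseteq> {0..<p} \<and> (if odd p then card S = (p+1) div 2 else card S = p div 2 \<or> card S = p div 2 + 1)}"
  using opt_iff card_le_p by blast

lemma mu_eq:
  assumes p3: "3 \<le> p"
  shows "mu (VV p) (EE p) = MM p"
  unfolding mu_def
proof (rule Max_eqI)
  have "{X. mutual_visibility_set (VV p) (EE p) X} \<subseteq> Pow (VV p)"
    by (auto simp: mutual_visibility_set_def)
  then have "finite {X. mutual_visibility_set (VV p) (EE p) X}" using finV finite_subset by blast
  then show "finite (card ` {X. mutual_visibility_set (VV p) (EE p) X})" by simp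
next
  fix y assume "y \<in> card ` {X. mutual_visibility_set (VV p) (EE p) X}"
  then obtain X where "mutual_visibility_set (VV p) (EE p) X" "y = card X" by blast
  then show "y \<le> MM p" using bound ar_le order_trans by metis
next
  define s0 where "s0 = (p+1) div 2"
  have s0p: "s0 \<le> p" using p3 s0_def by simp
  have S: "{0..<s0} \<subseteq> {0..<p}" using s0p by auto
  have "s0 * (p + 1 - s0) = MM p" using opt_iff[OF s0p] s0_def by auto
  then have "card (XS p {0..<s0}) = MM p" using card_XS[OF S] by simp
  then show "MM p \<in> card ` {X. mutual_visibility_set (VV p) (EE p) X}"
    using mv_XS[OF S] by (metis (mono_tags, lifting) image_eqI mem_Collect_eq)
qed

lemma num_eq:
  assumes p3: "3 \<le> p"
  shows "num_mu (VV p) (EE p) = (if odd p then p choose ((p + 1) div 2) else (p + 1) choose ((p + 2) div 2))"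
proof -
  define F where "F = {S. S \<subseteq> {0..<p} \<and> card S * (p + 1 - card S) = MM p}"
  have set_eq: "{X. mutual_visibility_set (VV p) (EE p) X \<and> card X = MM p} = XS p ` F"
  proof
    show "{X. mutual_visibility_set (VV p) (EE p) X \<and> card X = MM p} \<subseteq> XS p ` F"
    proof
      fix X assume "X \<in> {X. mutual_visibility_set (VV p) (EE p) X \<and> card X = MM p}"
      then have mv: "mutual_visibility_set (VV p) (EE p) X" and c: "card X = MM p" by auto
      have XV: "X \<subseteq> VV p" using mv by (simp add: mutual_visibility_set_def)
      from eqcase[OF mv c p3] have "X = XS p (Occ X)" "card (Occ X) * (p + 1 - card (Occ X)) = MM p" by auto
      moreover have "Occ X \<subseteq> {0..<p}" using Occ_sub[OF XV] .
      ultimately show "X \<in> XS p ` F" unfolding F_def by blast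
    qed
  next
    show "XS p ` F \<subseteq> {X. mutual_visibility_set (VV p) (EE p) X \<and> card X = MM p}"
      using mv_XS card_XS unfolding F_def by auto
  qed
  have inj: "inj_on (XS p) F"
    by (rule inj_on_inverseI[where g = Occ]) (auto simp: F_def Occ_XS)
  have "num_mu (VV p) (EE p) = card F"
    unfolding num_mu_def mu_eq[OF p3] set_eq using card_image[OF inj] .
  also have "card F = (if odd p then p choose ((p + 1) div 2) else (p + 1) choose ((p + 2) div 2))"
  proof (cases "odd p")
    case True
    have "F = {S. S \<subseteq> {0..<p} \<and> card S = (p+1) div 2}" unfolding F_def optset using True by simp
    then show ?thesis using True n_subsets[of "{0..<p}" "(p+1) div 2"] by simp
  next
    case False
    have "F = {S. S \<subseteq> {0..<p} \<and> card S = p div 2} \<union> {S. S \<subseteq> {0..<p} \<and> card S = Suc (p div 2)}"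
      unfolding F_def optset using False by auto
    moreover have "finite {S. S \<subseteq> {0..<p} \<and> card S = p div 2}" by (rule finite_subset[of _ "Pow {0..<p}"]) auto
    moreover have "finite {S. S \<subseteq> {0..<p} \<and> card S = Suc (p div 2)}" by (rule finite_subset[of _ "Pow {0..<p}"]) auto
    ultimately have "card F = card {S. S \<subseteq> {0..<p} \<and> card S = p div 2} + card {S. S \<subseteq> {0..<p} \<and> card S = Suc (p div 2)}"
      by (simp add: card_Un_disjoint disjoint_iff)
    also have "\<dots> = (p choose (p div 2)) + (p choose Suc (p div 2))"
      using n_subsets[of "{0..<p}"] by simp
    also have "\<dots> = Suc p choose Suc (p div 2)" by simp
    also have "Suc (p div 2) = (p + 2) div 2" by simp
    finally show ?thesis using False by simp
  qed
  finally show ?thesis .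
qed

theorem theorem3p1:
  fixes p :: nat
  assumes "p \<ge> 3"
  shows "mu (sierp_vertices p 2) (sierp_adj p 2) =
           (if odd p then (p + 1)^2 div 4 else p * (p + 2) div 4)
       \<and> num_mu (sierp_vertices p 2) (sierp_adj p 2) =
           (if odd p then p choose ((p + 1) div 2) else (p + 1) choose ((p + 2) div 2))"
  using mu_eq[OF assms] num_eq[OF assms] MM_stmt[of p] by simp

end
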